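(* Let $K$ be a clique simplicial complex, $X\cup Y=K_0$ a cover of its vertex set, $A:=X\cap Y$, and $P:=\{\sigma\in K\mid\sigma\subset X\text{ or }\sigma\subset Y\text{ or }\sigma\cap A\neq\emptyset\}$. Assume one of the following: (1) $A$ is nonempty and, for every edge $\tau\in K_1\setminus P$ and every subset $\mu\subset A$ with $|\mu|\le2$, the union $\tau\cup\mu$ is a simplex of $K$; (2) $A=\{v\}$ and, for every edge $\tau\in K_1\setminus P$, the set $\tau\cup\{v\}$ is a simplex of $K$. Then the inclusion $K_X\cup K_Y\hookrightarrow K$ is a weak equivalence.
   Context: A simplicial complex is a collection of finite nonempty subsets of a fixed set closed under taking nonempty subsets; $K_0$ is its vertex set, $K_1$ its set of edges, $K_B$ the subcomplex of simplices contained in $B$. $K$ is clique if a set with at least two elements is a simplex iff all its two-element subsets are simplices. Homotopical notions refer to geometric realizations. *)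

theory Defs
  imports "HOL-Analysis.Analysis"
begin

definition simplicial_complex :: "'a set set \<Rightarrow> bool" where
  "simplicial_complex K \<longleftrightarrow>
     (\<forall>\<sigma>\<in>K. finite \<sigma> \<and> \<sigma> \<noteq> {} \<and> (\<forall>\<tau>. \<tau> \<subseteq> \<sigma> \<and> \<tau> \<noteq> {} \<longrightarrow> \<tau> \<in> K))"

definition vertices :: "'a set set \<Rightarrow> 'a set" where
  "vertices K = {v. {v} \<in> K}"

definition edges :: "'a set set \<Rightarrow> 'a set set" where
  "edges K = {\<sigma>\<in>K. card \<sigma> = 2}"

definition full_subcomplex :: "'a set set \<Rightarrow> 'a set \<Rightarrow> 'a set set" where
  "full_subcomplex K B = {\<sigma>\<in>K. \<sigma> \<subseteq> B}"

definition clique_complex :: "'a set set \<Rightarrow> bool" where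
  "clique_complex K \<longleftrightarrow>
     (\<forall>\<sigma>. finite \<sigma> \<and> card \<sigma> \<ge> 2 \<longrightarrow>
        (\<sigma> \<in> K \<longleftrightarrow> (\<forall>u\<in>\<sigma>. \<forall>v\<in>\<sigma>. u \<noteq> v \<longrightarrow> {u, v} \<in> K)))"

text \<open>Geometric realization: points are barycentric coordinate functions whose
  support is a simplex; the topology is the coherent (weak) topology with respect to
  the closed simplices, each carrying its Euclidean (= product) topology.\<close>
definition closed_simplex :: "'a set \<Rightarrow> ('a \<Rightarrow> real) set" where
  "closed_simplex \<sigma> = {\<alpha>. (\<forall>v. 0 \<le> \<alpha> v) \<and> (\<forall>v. v \<notin> \<sigma> \<longrightarrow> \<alpha> v = 0) \<and> sum \<alpha> \<sigma> = 1}"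

definition realization_set :: "'a set set \<Rightarrow> ('a \<Rightarrow> real) set" where
  "realization_set K = (\<Union>\<sigma>\<in>K. closed_simplex \<sigma>)"

definition realization :: "'a set set \<Rightarrow> ('a \<Rightarrow> real) topology" where
  "realization K = topology (\<lambda>U. U \<subseteq> realization_set K \<and>
      (\<forall>\<sigma>\<in>K. openin (subtopology (powertop_real UNIV) (closed_simplex \<sigma>)) (U \<inter> closed_simplex \<sigma>)))"

text \<open>Weak homotopy equivalence: bijection on all homotopy sets
  \<open>[(S^n, b), (X, x)]\<close> (n \<ge> 0, every basepoint x), plus the empty-space case of \<open>\<pi>_0\<close>.\<close>
definition sphere_base :: "nat \<Rightarrow> real" where
  "sphere_base = (\<lambda>i. if i = 0 then 1 else 0)"

definition weak_equivalence :: "'a topology \<Rightarrow> 'b topology \<Rightarrow> ('a \<Rightarrow> 'b) \<Rightarrow> bool" where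
  "weak_equivalence X Y f \<longleftrightarrow>
     continuous_map X Y f \<and>
     (topspace X = {} \<longrightarrow> topspace Y = {}) \<and>
     (\<forall>n. \<forall>x\<in>topspace X.
        (\<forall>g h. continuous_map (nsphere n) X g \<and> g sphere_base = x \<and>
               continuous_map (nsphere n) X h \<and> h sphere_base = x \<and>
               homotopic_with (\<lambda>k. k sphere_base = f x) (nsphere n) Y (f \<circ> g) (f \<circ> h)
           \<longrightarrow> homotopic_with (\<lambda>k. k sphere_base = x) (nsphere n) X g h) \<and>
        (\<forall>k. continuous_map (nsphere n) Y k \<and> k sphere_base = f x \<longrightarrow>
           (\<exists>g. continuous_map (nsphere n) X g \<and> g sphere_base = x \<and>
                homotopic_with (\<lambda>k. k sphere_base = f x) (nsphere n) Y k (f \<circ> g))))"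

end

theory Submission
  imports Defs
begin

abbreviation CS :: "'a set \<Rightarrow> ('a \<Rightarrow> real) topology" where
  "CS \<sigma> \<equiv> subtopology (powertop_real UNIV) (closed_simplex \<sigma>)"

lemma istopology_real: "istopology (\<lambda>U. U \<subseteq> realization_set K \<and>
      (\<forall>\<sigma>\<in>K. openin (CS \<sigma>) (U \<inter> closed_simplex \<sigma>)))"
  unfolding istopology_def
proof (rule conjI; intro allI impI)
  fix S T assume S: "S \<subseteq> realization_set K \<and> (\<forall>\<sigma>\<in>K. openin (CS \<sigma>) (S \<inter> closed_simplex \<sigma>))"
    and T: "T \<subseteq> realization_set K \<and> (\<forall>\<sigma>\<in>K. openin (CS \<sigma>) (T \<inter> closed_simplex \<sigma>))"
  have e: "S \<inter> T \<inter> closed_simplex \<sigma> = (S \<inter> closed_simplex \<sigma>) \<inter> (T \<inter> closed_simplex \<sigma>)" for \<sigma>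
    by blast
  show "S \<inter> T \<subseteq> realization_set K \<and> (\<forall>\<sigma>\<in>K. openin (CS \<sigma>) (S \<inter> T \<inter> closed_simplex \<sigma>))"
  proof (intro conjI ballI)
    show "S \<inter> T \<subseteq> realization_set K" using S by blast
    fix \<sigma> assume s: "\<sigma> \<in> K"
    have a: "openin (CS \<sigma>) (S \<inter> closed_simplex \<sigma>)" using S s by blast
    have b: "openin (CS \<sigma>) (T \<inter> closed_simplex \<sigma>)" using T s by blast
    show "openin (CS \<sigma>) (S \<inter> T \<inter> closed_simplex \<sigma>)"
      unfolding e by (rule openin_Int[OF a b])
  qed
next
  fix F :: "('a \<Rightarrow> real) set set"
  assume F: "\<forall>S\<in>F. S \<subseteq> realization_set K \<and> (\<forall>\<sigma>\<in>K. openin (CS \<sigma>) (S \<inter> closed_simplex \<sigma>))"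
  show "\<Union>F \<subseteq> realization_set K \<and> (\<forall>\<sigma>\<in>K. openin (CS \<sigma>) (\<Union>F \<inter> closed_simplex \<sigma>))"
  proof (intro conjI ballI)
    show "\<Union>F \<subseteq> realization_set K" using F by blast
    fix \<sigma> assume s: "\<sigma> \<in> K"
    have "openin (CS \<sigma>) (\<Union>S\<in>F. S \<inter> closed_simplex \<sigma>)"
      by (rule openin_Union) (use F s in blast)
    then show "openin (CS \<sigma>) (\<Union>F \<inter> closed_simplex \<sigma>)"
      by (simp only: Int_Union2)
  qed
qed

lemma openin_realization:
  "openin (realization K) U \<longleftrightarrow> U \<subseteq> realization_set K \<and>
      (\<forall>\<sigma>\<in>K. openin (CS \<sigma>) (U \<inter> closed_simplex \<sigma>))"
  unfolding realization_def using istopology_real[of K] by simp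

lemma topspace_realization [simp]: "topspace (realization K) = realization_set K"
proof -
  have "openin (realization K) (realization_set K)"
    unfolding openin_realization
  proof (intro conjI ballI)
    fix \<sigma> assume "\<sigma> \<in> K"
    then have "realization_set K \<inter> closed_simplex \<sigma> = topspace (CS \<sigma>)"
      by (auto simp: realization_set_def)
    then show "openin (CS \<sigma>) (realization_set K \<inter> closed_simplex \<sigma>)"
      using openin_topspace[of "CS \<sigma>"] by simp
  qed simp
  then have "realization_set K \<subseteq> topspace (realization K)" by (rule openin_subset)
  moreover have "topspace (realization K) \<subseteq> realization_set K"
    using openin_topspace[of "realization K"] unfolding openin_realization by (rule conjunct1)
  ultimately show ?thesis by (simp only: subset_antisym)
qed

lemma cont_from_simplex:
  assumes "\<sigma> \<in> K"
  shows "continuous_map (CS \<sigma>) (realization K) (\<lambda>x. x)"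
  unfolding continuous_map_def
proof (intro conjI allI impI)
  show "(\<lambda>x. x) \<in> topspace (CS \<sigma>) \<rightarrow> topspace (realization K)"
    using assms by (auto simp: realization_set_def)
  fix U assume "openin (realization K) U"
  then have "openin (CS \<sigma>) (U \<inter> closed_simplex \<sigma>)"
    using assms openin_realization by blast
  moreover have "{x \<in> topspace (CS \<sigma>). x \<in> U} = U \<inter> closed_simplex \<sigma>" by auto
  ultimately show "openin (CS \<sigma>) {x \<in> topspace (CS \<sigma>). x \<in> U}" by simp
qed

lemma cont_realization:
  assumes "f \<in> realization_set K \<rightarrow> topspace T"
    and "\<And>\<sigma>. \<sigma> \<in> K \<Longrightarrow> continuous_map (CS \<sigma>) T f"
  shows "continuous_map (realization K) T f"
  unfolding continuous_map_def
proof (intro conjI allI impI)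
  show "f \<in> topspace (realization K) \<rightarrow> topspace T" using assms by simp
  fix V assume V: "openin T V"
  show "openin (realization K) {x \<in> topspace (realization K). f x \<in> V}"
    unfolding openin_realization
  proof (intro conjI ballI)
    fix \<sigma> assume s: "\<sigma> \<in> K"
    have "{x \<in> topspace (realization K). f x \<in> V} \<inter> closed_simplex \<sigma> = {x \<in> topspace (CS \<sigma>). f x \<in> V}"
      using s by (auto simp: realization_set_def)
    then show "openin (CS \<sigma>) ({x \<in> topspace (realization K). f x \<in> V} \<inter> closed_simplex \<sigma>)"
      using assms(2)[OF s] V by (simp add: continuous_map_def)
  qed auto
qed

lemma cont_realization_prod:
  assumes "H \<in> {0..1} \<times> realization_set K \<rightarrow> topspace T"
    and "\<And>\<sigma>. \<sigma> \<in> K \<Longrightarrow> continuous_map (prod_topology (top_of_set {0..1::real}) (CS \<sigma>)) T H"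
  shows "continuous_map (prod_topology (top_of_set {0..1::real}) (realization K)) T H"
  unfolding continuous_map_def
proof (intro conjI allI impI)
  show "H \<in> topspace (prod_topology (top_of_set {0..1}) (realization K)) \<rightarrow> topspace T"
    using assms by simp
  fix V assume V: "openin T V"
  define W where "W = {x \<in> topspace (prod_topology (top_of_set {0..1::real}) (realization K)). H x \<in> V}"
  have Wsub: "W \<subseteq> {0..1} \<times> realization_set K" unfolding W_def by auto
  have Ws: "openin (prod_topology (top_of_set {0..1::real}) (CS \<sigma>)) (W \<inter> ({0..1} \<times> closed_simplex \<sigma>))"
    if s: "\<sigma> \<in> K" for \<sigma>
  proof -
    have "W \<inter> ({0..1} \<times> closed_simplex \<sigma>) = {x \<in> topspace (prod_topology (top_of_set {0..1::real}) (CS \<sigma>)). H x \<in> V}"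
      using s by (auto simp: W_def realization_set_def)
    then show ?thesis using assms(2)[OF s] V by (simp add: continuous_map_def)
  qed
  show "openin (prod_topology (top_of_set {0..1}) (realization K)) W"
  proof (rule openin_subopen[THEN iffD2], intro ballI)
    fix p assume p: "p \<in> W"
    obtain t0 \<alpha>0 where p_eq: "p = (t0, \<alpha>0)" by force
    from p Wsub p_eq obtain \<sigma>0 where s0: "\<sigma>0 \<in> K" "\<alpha>0 \<in> closed_simplex \<sigma>0" and t0: "t0 \<in> {0..1}"
      by (auto simp: realization_set_def)
    have pin: "(t0, \<alpha>0) \<in> W \<inter> ({0..1} \<times> closed_simplex \<sigma>0)" using p p_eq s0 t0 by auto
    have "\<exists>U1 U2. openin (top_of_set {0..1::real}) U1 \<and> openin (CS \<sigma>0) U2 \<and>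
      t0 \<in> U1 \<and> \<alpha>0 \<in> U2 \<and> U1 \<times> U2 \<subseteq> W \<inter> ({0..1} \<times> closed_simplex \<sigma>0)"
      using iffD1[OF openin_prod_topology_alt Ws[OF s0(1)], rule_format, OF pin] .
    then obtain U1 U2 where U: "openin (top_of_set {0..1::real}) U1" "openin (CS \<sigma>0) U2"
      "t0 \<in> U1" "\<alpha>0 \<in> U2" "U1 \<times> U2 \<subseteq> W \<inter> ({0..1} \<times> closed_simplex \<sigma>0)"
      by blast
    then obtain d where d: "d > 0" "ball t0 d \<inter> {0..1} \<subseteq> U1"
      by (metis openin_contains_ball inf_commute)
    define J where "J = cball t0 (d/2) \<inter> {0..1::real}"
    have J_sub: "J \<subseteq> U1" using d by (auto simp: J_def)
    have Jc: "compactin (top_of_set {0..1::real}) J"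
      by (simp add: J_def compact_Int_closed compactin_subtopology)
    define N where "N = {\<alpha> \<in> realization_set K. J \<times> {\<alpha>} \<subseteq> W}"
    have a0N: "\<alpha>0 \<in> N"
      using U J_sub s0 by (auto simp: N_def realization_set_def)
    have No: "openin (realization K) N"
      unfolding openin_realization
    proof (intro conjI ballI)
      show "N \<subseteq> realization_set K" by (auto simp: N_def)
      fix \<sigma> assume s: "\<sigma> \<in> K"
      show "openin (CS \<sigma>) (N \<inter> closed_simplex \<sigma>)"
      proof (rule openin_subopen[THEN iffD2], intro ballI)
        fix \<alpha> assume a: "\<alpha> \<in> N \<inter> closed_simplex \<sigma>"
        then have "J \<times> {\<alpha>} \<subseteq> W \<inter> ({0..1} \<times> closed_simplex \<sigma>)"
          by (auto simp: N_def J_def)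
        then obtain U' V' where UV: "openin (top_of_set {0..1::real}) U'" "openin (CS \<sigma>) V'"
          "J \<subseteq> U'" "\<alpha> \<in> V'" "U' \<times> V' \<subseteq> W \<inter> ({0..1} \<times> closed_simplex \<sigma>)"
          using tube_lemma_left[OF Ws[OF s] Jc, of \<alpha>] a by auto
        have "V' \<subseteq> N \<inter> closed_simplex \<sigma>"
        proof
          fix \<beta> assume b: "\<beta> \<in> V'"
          have bs: "\<beta> \<in> closed_simplex \<sigma>" using UV(2) b openin_subset by fastforce
          then have "\<beta> \<in> realization_set K" using s by (auto simp: realization_set_def)
          moreover have "J \<times> {\<beta>} \<subseteq> W" using UV(3,5) b by blast
          ultimately show "\<beta> \<in> N \<inter> closed_simplex \<sigma>" using bs by (auto simp: N_def)
        qed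
        then show "\<exists>T. openin (CS \<sigma>) T \<and> \<alpha> \<in> T \<and> T \<subseteq> N \<inter> closed_simplex \<sigma>"
          using UV by blast
      qed
    qed
    have Bo: "openin (top_of_set {0..1::real}) (ball t0 (d/2) \<inter> {0..1})"
      by (metis Int_commute open_ball openin_open_Int)
    have BW: "(ball t0 (d/2) \<inter> {0..1}) \<times> N \<subseteq> W"
    proof
      fix q assume q: "q \<in> (ball t0 (d/2) \<inter> {0..1}) \<times> N"
      have q1: "fst q \<in> ball t0 (d/2) \<inter> {0..1}" and q2: "snd q \<in> N"
        using q by (simp_all add: mem_Times_iff)
      have "fst q \<in> J" using q1 ball_subset_cball unfolding J_def by blast
      moreover have "J \<times> {snd q} \<subseteq> W" using q2 unfolding N_def mem_Collect_eq by (rule conjunct2)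
      ultimately have "(fst q, snd q) \<in> W" by blast
      then show "q \<in> W" by simp
    qed
    have pB: "p \<in> (ball t0 (d/2) \<inter> {0..1}) \<times> N"
      using a0N p_eq t0 d(1) by simp
    show "\<exists>T. openin (prod_topology (top_of_set {0..1}) (realization K)) T \<and> p \<in> T \<and> T \<subseteq> W"
    proof (intro exI conjI)
      show "openin (prod_topology (top_of_set {0..1}) (realization K)) ((ball t0 (d/2) \<inter> {0..1}) \<times> N)"
        using No Bo by (simp add: openin_prod_Times_iff)
    qed (rule pB, rule BW)
  qed
qed

lemma sphere_base_in: "sphere_base \<in> topspace (nsphere n)"
proof -
  have "(\<Sum>i\<le>n. sphere_base i ^ 2) = (\<Sum>i\<in>{0}. sphere_base i ^ 2)"
    by (rule sum.mono_neutral_right) (auto simp: sphere_base_def)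
  then show ?thesis by (simp add: nsphere sphere_base_def)
qed

lemma weq_from_retraction:
  fixes TL TK :: "'a topology"
  assumes cid: "continuous_map TL TK id"
    and cr: "continuous_map TK TL r"
    and rfix: "\<And>x. x \<in> topspace TL \<Longrightarrow> r x = x"
    and cH: "continuous_map (prod_topology (top_of_set {0..1::real}) TK) TK H"
    and H0: "\<And>x. H (0, x) = x" and H1: "\<And>x. H (1, x) = r x"
    and Hfix: "\<And>t x. t \<in> {0..1} \<Longrightarrow> x \<in> topspace TL \<Longrightarrow> H (t, x) = x"
    and ne: "topspace TL = {} \<Longrightarrow> topspace TK = {}"
  shows "weak_equivalence TL TK id"
  unfolding weak_equivalence_def
proof (intro conjI allI ballI impI)
  show "continuous_map TL TK id" by (rule cid)
  show "topspace TL = {} \<Longrightarrow> topspace TK = {}" by (rule ne)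
next
  fix n x g h
  assume x: "x \<in> topspace TL"
  assume A: "continuous_map (nsphere n) TL g \<and> g sphere_base = x \<and>
          continuous_map (nsphere n) TL h \<and> h sphere_base = x \<and>
          homotopic_with (\<lambda>k. k sphere_base = id x) (nsphere n) TK (id \<circ> g) (id \<circ> h)"
  have "homotopic_with (\<lambda>k. k sphere_base = x) (nsphere n) TL (r \<circ> (id \<circ> g)) (r \<circ> (id \<circ> h))"
  proof (rule homotopic_with_compose_continuous_map_left[OF _ cr])
    show "homotopic_with (\<lambda>k. k sphere_base = x) (nsphere n) TK (id \<circ> g) (id \<circ> h)"
      using A by simp
  qed (simp add: rfix x)
  then show "homotopic_with (\<lambda>k. k sphere_base = x) (nsphere n) TL g h"
  proof (rule homotopic_with_eq)
    fix z assume z: "z \<in> topspace (nsphere n)"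
    have "g z \<in> topspace TL" "h z \<in> topspace TL"
      using A z continuous_map_image_subset_topspace by blast+
    then show "g z = (r \<circ> (id \<circ> g)) z" "h z = (r \<circ> (id \<circ> h)) z"
      by (simp_all add: rfix)
  next
    fix k k' :: "(nat \<Rightarrow> real) \<Rightarrow> 'a"
    show "(\<And>z. z \<in> topspace (nsphere n) \<Longrightarrow> k z = k' z) \<Longrightarrow> (k sphere_base = x) = (k' sphere_base = x)"
    proof -
      assume "\<And>z. z \<in> topspace (nsphere n) \<Longrightarrow> k z = k' z"
      then have "k sphere_base = k' sphere_base" using sphere_base_in by blast
      then show "(k sphere_base = x) = (k' sphere_base = x)" by simp
    qed
  qed
next
  fix n x k
  assume x: "x \<in> topspace TL"
  assume k: "continuous_map (nsphere n) TK k \<and> k sphere_base = id x"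
  show "\<exists>g. continuous_map (nsphere n) TL g \<and> g sphere_base = x \<and>
                homotopic_with (\<lambda>k. k sphere_base = id x) (nsphere n) TK k (id \<circ> g)"
  proof (intro exI conjI)
    show "continuous_map (nsphere n) TL (r \<circ> k)"
      using k cr continuous_map_compose by blast
    show "(r \<circ> k) sphere_base = x" using k x rfix by simp
    show "homotopic_with (\<lambda>k. k sphere_base = id x) (nsphere n) TK k (id \<circ> (r \<circ> k))"
      unfolding homotopic_with_def
    proof (intro exI conjI allI ballI)
      have "continuous_map (prod_topology (top_of_set {0..1::real}) (nsphere n))
             (prod_topology (top_of_set {0..1::real}) TK) (\<lambda>(t,z). (t, k z))"
      proof -
        have "continuous_map (prod_topology (top_of_set {0..1::real}) (nsphere n)) TK (k \<circ> snd)"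
          using k continuous_map_compose[OF continuous_map_snd] by blast
        then have "continuous_map (prod_topology (top_of_set {0..1::real}) (nsphere n))
             (prod_topology (top_of_set {0..1::real}) TK) (\<lambda>p. (fst p, (k \<circ> snd) p))"
          by (simp add: continuous_map_paired continuous_map_fst o_def)
        then show ?thesis by (simp add: case_prod_unfold)
      qed
      then show "continuous_map (prod_topology (top_of_set {0..1::real}) (nsphere n)) TK (H \<circ> (\<lambda>(t,z). (t, k z)))"
        using cH continuous_map_compose by blast
    qed (auto simp: H0 H1 Hfix x k)
  qed
qed

definition sX :: "'a set \<Rightarrow> 'a set \<Rightarrow> ('a \<Rightarrow> real) \<Rightarrow> real" where
  "sX X Y \<alpha> = sum \<alpha> {u. u \<in> X \<and> u \<notin> Y \<and> \<alpha> u \<noteq> 0}"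

definition EE :: "'a set \<Rightarrow> 'a set \<Rightarrow> ('a \<Rightarrow> real) \<Rightarrow> 'a \<Rightarrow> real" where
  "EE X Y \<alpha> u = (if u \<in> X \<and> u \<notin> Y then min (\<alpha> u) (sX Y X \<alpha>)
     else if u \<in> Y \<and> u \<notin> X then min (\<alpha> u) (sX X Y \<alpha>) else 0)"

definition Dm :: "'a set \<Rightarrow> 'a set \<Rightarrow> ('a \<Rightarrow> real) \<Rightarrow> real" where
  "Dm X Y \<alpha> = sum (EE X Y \<alpha>) {u. \<alpha> u \<noteq> 0}"

definition rr :: "'a set \<Rightarrow> 'a set \<Rightarrow> 'a \<Rightarrow> ('a \<Rightarrow> real) \<Rightarrow> ('a \<Rightarrow> real)" where
  "rr X Y a \<alpha> = (\<lambda>u. \<alpha> u - EE X Y \<alpha> u + (if u = a then Dm X Y \<alpha> else 0))"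

definition HH :: "'a set \<Rightarrow> 'a set \<Rightarrow> 'a \<Rightarrow> real \<times> ('a \<Rightarrow> real) \<Rightarrow> ('a \<Rightarrow> real)" where
  "HH X Y a p = (\<lambda>u. snd p u + fst p * (rr X Y a (snd p) u - snd p u))"

lemma cs_nonneg: "\<alpha> \<in> closed_simplex \<sigma> \<Longrightarrow> 0 \<le> \<alpha> u"
  by (simp add: closed_simplex_def)

lemma cs_zero: "\<alpha> \<in> closed_simplex \<sigma> \<Longrightarrow> u \<notin> \<sigma> \<Longrightarrow> \<alpha> u = 0"
  by (simp add: closed_simplex_def)

lemma cs_sum: "\<alpha> \<in> closed_simplex \<sigma> \<Longrightarrow> sum \<alpha> \<sigma> = 1"
  by (simp add: closed_simplex_def)

lemma sX_eq:
  assumes "\<alpha> \<in> closed_simplex \<sigma>" "finite \<sigma>"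
  shows "sX X Y \<alpha> = sum \<alpha> (\<sigma> \<inter> {u. u \<in> X \<and> u \<notin> Y})"
  unfolding sX_def
proof (rule sum.mono_neutral_left)
  show "{u. u \<in> X \<and> u \<notin> Y \<and> \<alpha> u \<noteq> 0} \<subseteq> \<sigma> \<inter> {u. u \<in> X \<and> u \<notin> Y}"
    using cs_zero[OF assms(1)] by blast
qed (use assms in auto)

lemma sX_nonneg: "\<alpha> \<in> closed_simplex \<sigma> \<Longrightarrow> 0 \<le> sX X Y \<alpha>"
  unfolding sX_def by (rule sum_nonneg) (simp add: cs_nonneg)

lemma le_sX:
  assumes "\<alpha> \<in> closed_simplex \<sigma>" "finite \<sigma>" "u \<in> X" "u \<notin> Y"
  shows "\<alpha> u \<le> sX X Y \<alpha>"
proof (cases "u \<in> \<sigma>")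
  case True
  then show ?thesis unfolding sX_eq[OF assms(1,2)]
    by (intro member_le_sum) (use assms True cs_nonneg in auto)
next
  case False
  then show ?thesis using cs_zero[OF assms(1)] sX_nonneg[OF assms(1)] by simp
qed

lemma EE_zero: "\<alpha> \<in> closed_simplex \<sigma> \<Longrightarrow> \<alpha> u = 0 \<Longrightarrow> EE X Y \<alpha> u = 0"
  unfolding EE_def using sX_nonneg[of \<alpha> \<sigma>] by auto

lemma EE_bounds: "\<alpha> \<in> closed_simplex \<sigma> \<Longrightarrow> 0 \<le> EE X Y \<alpha> u \<and> EE X Y \<alpha> u \<le> \<alpha> u"
  unfolding EE_def using sX_nonneg[of \<alpha> \<sigma>] cs_nonneg[of \<alpha> \<sigma> u] by auto

lemma Dm_eq:
  assumes "\<alpha> \<in> closed_simplex \<sigma>" "finite \<sigma>" "\<sigma> \<subseteq> \<tau>" "finite \<tau>"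
  shows "Dm X Y \<alpha> = sum (EE X Y \<alpha>) \<tau>"
  unfolding Dm_def
proof (rule sum.mono_neutral_left)
  show "{u. \<alpha> u \<noteq> 0} \<subseteq> \<tau>" using cs_zero[OF assms(1)] assms(3) by blast
  show "\<forall>i\<in>\<tau> - {u. \<alpha> u \<noteq> 0}. EE X Y \<alpha> i = 0" using EE_zero[OF assms(1)] by auto
qed (use assms in auto)

lemma Dm_nonneg: "\<alpha> \<in> closed_simplex \<sigma> \<Longrightarrow> 0 \<le> Dm X Y \<alpha>"
  unfolding Dm_def by (rule sum_nonneg) (use EE_bounds in metis)

lemma cs_mono: "\<alpha> \<in> closed_simplex \<sigma> \<Longrightarrow> finite \<tau> \<Longrightarrow> \<sigma> \<subseteq> \<tau> \<Longrightarrow> \<alpha> \<in> closed_simplex \<tau>"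
proof -
  assume a: "\<alpha> \<in> closed_simplex \<sigma>" "finite \<tau>" "\<sigma> \<subseteq> \<tau>"
  have "sum \<alpha> \<tau> = sum \<alpha> \<sigma>"
    by (rule sum.mono_neutral_right) (use a cs_zero[OF a(1)] in auto)
  then show ?thesis using a by (auto simp: closed_simplex_def)
qed

lemma rr_cs:
  assumes "\<alpha> \<in> closed_simplex \<sigma>" "finite \<tau>" "\<sigma> \<subseteq> \<tau>" "a \<in> \<tau>"
  shows "rr X Y a \<alpha> \<in> closed_simplex \<tau>"
proof -
  have fs: "finite \<sigma>" using assms finite_subset by blast
  have at: "\<alpha> \<in> closed_simplex \<tau>" using cs_mono assms by blast
  have "sum (rr X Y a \<alpha>) \<tau> = sum \<alpha> \<tau> - sum (EE X Y \<alpha>) \<tau> + sum (\<lambda>u. if u = a then Dm X Y \<alpha> else 0) \<tau>"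
    unfolding rr_def by (simp add: sum.distrib sum_subtractf)
  also have "\<dots> = 1"
    using Dm_eq[OF assms(1) fs assms(3,2)] cs_sum[OF at] assms(2,4) by simp
  finally have "sum (rr X Y a \<alpha>) \<tau> = 1" .
  moreover have "\<forall>u. 0 \<le> rr X Y a \<alpha> u"
    using EE_bounds[OF assms(1)] Dm_nonneg[OF assms(1)] by (auto simp: rr_def)
  moreover have "\<forall>u. u \<notin> \<tau> \<longrightarrow> rr X Y a \<alpha> u = 0"
    using cs_zero[OF at] EE_zero[OF assms(1)] cs_zero[OF assms(1)] assms(3,4) by (auto simp: rr_def)
  ultimately show ?thesis by (simp add: closed_simplex_def)
qed

lemma rr_id:
  assumes "\<alpha> \<in> closed_simplex \<sigma>" "finite \<sigma>" "\<sigma> \<subseteq> X \<or> \<sigma> \<subseteq> Y"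
  shows "rr X Y a \<alpha> = \<alpha>"
proof -
  have E0: "EE X Y \<alpha> u = 0" for u
  proof (cases "\<alpha> u = 0")
    case True then show ?thesis using EE_zero[OF assms(1)] by blast
  next
    case False
    then have u: "u \<in> \<sigma>" using cs_zero[OF assms(1)] by blast
    show ?thesis
    proof (cases "\<sigma> \<subseteq> X")
      case True
      have "sX Y X \<alpha> = 0" unfolding sX_def using True cs_zero[OF assms(1)]
        by (metis (mono_tags, lifting) empty_Collect_eq subsetD sum.empty)
      then show ?thesis using True u cs_nonneg[OF assms(1), of u] by (auto simp: EE_def)
    next
      case False
      then have Y: "\<sigma> \<subseteq> Y" using assms(3) by blast
      have "sX X Y \<alpha> = 0" unfolding sX_def using Y cs_zero[OF assms(1)]
        by (metis (mono_tags, lifting) empty_Collect_eq subsetD sum.empty)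
      then show ?thesis using Y u cs_nonneg[OF assms(1), of u] by (auto simp: EE_def)
    qed
  qed
  then have "Dm X Y \<alpha> = 0" by (simp add: Dm_def)
  then show ?thesis using E0 by (simp add: rr_def fun_eq_iff)
qed

lemma rr_kill_X:
  assumes "\<alpha> \<in> closed_simplex \<sigma>" "finite \<sigma>" "sX X Y \<alpha> \<le> sX Y X \<alpha>" "a \<in> Y"
    "u \<in> X" "u \<notin> Y"
  shows "rr X Y a \<alpha> u = 0"
proof -
  have "\<alpha> u \<le> sX Y X \<alpha>" using le_sX[OF assms(1,2,5,6)] assms(3) by linarith
  then have "EE X Y \<alpha> u = \<alpha> u" using assms(5,6) by (simp add: EE_def)
  then show ?thesis using assms(4,6) by (auto simp: rr_def)
qed

lemma rr_kill_Y:
  assumes "\<alpha> \<in> closed_simplex \<sigma>" "finite \<sigma>" "sX Y X \<alpha> \<le> sX X Y \<alpha>" "a \<in> X"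
    "u \<in> Y" "u \<notin> X"
  shows "rr X Y a \<alpha> u = 0"
proof -
  have "\<alpha> u \<le> sX X Y \<alpha>" using le_sX[OF assms(1,2,5,6)] assms(3) by linarith
  then have "EE X Y \<alpha> u = \<alpha> u" using assms(5,6) by (simp add: EE_def)
  then show ?thesis using assms(4,6) by (auto simp: rr_def)
qed

lemma cs_restrict:
  assumes "\<beta> \<in> closed_simplex \<tau>" "finite \<tau>" "\<And>u. u \<notin> B \<Longrightarrow> \<beta> u = 0"
  shows "\<beta> \<in> closed_simplex (\<tau> \<inter> B)"
proof -
  have "sum \<beta> (\<tau> \<inter> B) = sum \<beta> \<tau>"
    by (rule sum.mono_neutral_left) (use assms in auto)
  then show ?thesis using assms by (auto simp: closed_simplex_def)
qed

lemma HH_cs: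
  assumes "\<alpha> \<in> closed_simplex \<tau>" "rr X Y a \<alpha> \<in> closed_simplex \<tau>" "t \<in> {0..1}"
  shows "HH X Y a (t, \<alpha>) \<in> closed_simplex \<tau>"
proof -
  have e: "HH X Y a (t, \<alpha>) = (\<lambda>u. (1 - t) * \<alpha> u + t * rr X Y a \<alpha> u)"
    by (auto simp: HH_def algebra_simps)
  have "sum (HH X Y a (t, \<alpha>)) \<tau> = (1 - t) * sum \<alpha> \<tau> + t * sum (rr X Y a \<alpha>) \<tau>"
    unfolding e by (simp add: sum.distrib sum_distrib_left)
  also have "\<dots> = 1" using cs_sum[OF assms(1)] cs_sum[OF assms(2)] by simp
  finally show ?thesis
    using assms cs_nonneg[OF assms(1)] cs_nonneg[OF assms(2)] cs_zero[OF assms(1)] cs_zero[OF assms(2)]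
    unfolding e by (auto simp: closed_simplex_def)
qed

lemma cont_coord: "continuous_map (CS \<sigma>) euclideanreal (\<lambda>\<alpha>. \<alpha> u)"
  by (rule continuous_map_from_subtopology)
     (use continuous_map_product_projection[of u UNIV "\<lambda>_. euclideanreal"] in simp)

lemma cont_sX:
  assumes "finite \<sigma>"
  shows "continuous_map (CS \<sigma>) euclideanreal (sX X Y)"
proof (rule continuous_map_eq)
  show "continuous_map (CS \<sigma>) euclideanreal (\<lambda>\<alpha>. sum \<alpha> (\<sigma> \<inter> {u. u \<in> X \<and> u \<notin> Y}))"
    using assms by (intro continuous_map_sum cont_coord) auto
  show "\<And>\<alpha>. \<alpha> \<in> topspace (CS \<sigma>) \<Longrightarrow> sum \<alpha> (\<sigma> \<inter> {u. u \<in> X \<and> u \<notin> Y}) = sX X Y \<alpha>"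
    using sX_eq assms by fastforce
qed

lemma cont_EE:
  assumes "finite \<sigma>"
  shows "continuous_map (CS \<sigma>) euclideanreal (\<lambda>\<alpha>. EE X Y \<alpha> u)"
proof (cases "u \<in> X \<and> u \<notin> Y")
  case True
  then have eq: "(\<lambda>\<alpha>. EE X Y \<alpha> u) = (\<lambda>\<alpha>. min (\<alpha> u) (sX Y X \<alpha>))" by (simp add: EE_def fun_eq_iff)
  show ?thesis unfolding eq by (intro continuous_map_real_min cont_coord cont_sX assms)
next
  case F1: False
  show ?thesis
  proof (cases "u \<in> Y \<and> u \<notin> X")
    case True
    then have eq: "(\<lambda>\<alpha>. EE X Y \<alpha> u) = (\<lambda>\<alpha>. min (\<alpha> u) (sX X Y \<alpha>))" by (simp add: EE_def fun_eq_iff)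
    show ?thesis unfolding eq by (intro continuous_map_real_min cont_coord cont_sX assms)
  next
    case False
    then have "(\<lambda>\<alpha>. EE X Y \<alpha> u) = (\<lambda>\<alpha>. 0)" using F1 unfolding EE_def fun_eq_iff by auto
    then show ?thesis by simp
  qed
qed

lemma cont_Dm:
  assumes "finite \<sigma>"
  shows "continuous_map (CS \<sigma>) euclideanreal (Dm X Y)"
proof (rule continuous_map_eq)
  show "continuous_map (CS \<sigma>) euclideanreal (\<lambda>\<alpha>. \<Sum>u\<in>\<sigma>. EE X Y \<alpha> u)"
    using assms by (intro continuous_map_sum cont_EE) auto
  show "\<And>\<alpha>. \<alpha> \<in> topspace (CS \<sigma>) \<Longrightarrow> (\<Sum>u\<in>\<sigma>. EE X Y \<alpha> u) = Dm X Y \<alpha>"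
    using Dm_eq assms by fastforce
qed

lemma cont_rr_u:
  assumes "finite \<sigma>"
  shows "continuous_map (CS \<sigma>) euclideanreal (\<lambda>\<alpha>. rr X Y a \<alpha> u)"
proof (cases "u = a")
  case True
  then show ?thesis unfolding rr_def
    by simp (intro continuous_map_add continuous_map_diff cont_coord cont_EE[OF assms] cont_Dm[OF assms])
next
  case False
  then show ?thesis unfolding rr_def
    by simp (intro continuous_map_diff cont_coord cont_EE[OF assms])
qed

lemma cont_rr:
  assumes "finite \<sigma>"
  shows "continuous_map (CS \<sigma>) (powertop_real UNIV) (rr X Y a)"
  using cont_rr_u[OF assms] by (simp add: continuous_map_componentwise_UNIV)

lemma cont_HH:
  assumes "finite \<sigma>"
  shows "continuous_map (prod_topology (top_of_set {0..1::real}) (CS \<sigma>)) (powertop_real UNIV) (HH X Y a)"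
proof -
  have f: "continuous_map (prod_topology (top_of_set {0..1::real}) (CS \<sigma>)) euclideanreal fst"
    using continuous_map_fst continuous_map_into_fulltopology by blast
  have s: "continuous_map (prod_topology (top_of_set {0..1::real}) (CS \<sigma>)) euclideanreal (\<lambda>p. snd p u)" for u
    using continuous_map_compose[OF continuous_map_snd cont_coord] by (simp add: o_def)
  have r: "continuous_map (prod_topology (top_of_set {0..1::real}) (CS \<sigma>)) euclideanreal (\<lambda>p. rr X Y a (snd p) u)" for u
    using continuous_map_compose[OF continuous_map_snd cont_rr_u[OF assms]] by (simp add: o_def)
  show ?thesis unfolding continuous_map_componentwise_UNIV HH_def
    using f s r by (intro allI continuous_map_add continuous_map_real_mult continuous_map_diff) auto
qed

lemma sc_sub: "simplicial_complex K \<Longrightarrow> \<sigma> \<in> K \<Longrightarrow> \<tau> \<subseteq> \<sigma> \<Longrightarrow> \<tau> \<noteq> {} \<Longrightarrow> \<tau> \<in> K"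
  unfolding simplicial_complex_def by blast

lemma sc_fin: "simplicial_complex K \<Longrightarrow> \<sigma> \<in> K \<Longrightarrow> finite \<sigma>"
  unfolding simplicial_complex_def by blast

lemma sc_vert: "simplicial_complex K \<Longrightarrow> \<sigma> \<in> K \<Longrightarrow> u \<in> \<sigma> \<Longrightarrow> u \<in> vertices K"
  unfolding vertices_def using sc_sub[of K \<sigma> "{u}"] by auto

lemma join_a:
  assumes sc: "simplicial_complex K" and cl: "clique_complex K"
    and cov: "X \<union> Y = vertices K"
    and hyp: "(X \<inter> Y \<noteq> {} \<and>
          (\<forall>\<tau>\<in>edges K - {\<sigma>\<in>K. \<sigma> \<subseteq> X \<or> \<sigma> \<subseteq> Y \<or> \<sigma> \<inter> (X \<inter> Y) \<noteq> {}}.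
             \<forall>\<mu>. \<mu> \<subseteq> X \<inter> Y \<and> finite \<mu> \<and> card \<mu> \<le> 2 \<longrightarrow> \<tau> \<union> \<mu> \<in> K))
         \<or> (\<exists>v. X \<inter> Y = {v} \<and>
          (\<forall>\<tau>\<in>edges K - {\<sigma>\<in>K. \<sigma> \<subseteq> X \<or> \<sigma> \<subseteq> Y \<or> \<sigma> \<inter> (X \<inter> Y) \<noteq> {}}.
             \<tau> \<union> {v} \<in> K))"
    and a: "a \<in> X" "a \<in> Y"
    and s: "\<sigma> \<in> K" "\<not> \<sigma> \<subseteq> X" "\<not> \<sigma> \<subseteq> Y"
  shows "insert a \<sigma> \<in> K"
proof -
  have V: "z \<in> X \<union> Y" if "z \<in> \<sigma>" for z using sc_vert[OF sc s(1) that] cov by blast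
  obtain u where u: "u \<in> \<sigma>" "u \<notin> X" using s(2) by blast
  obtain w where w: "w \<in> \<sigma>" "w \<notin> Y" using s(3) by blast
  have uY: "u \<in> Y" using V u by blast
  have wX: "w \<in> X" using V w by blast
  have uw: "u \<noteq> w" using u w wX by blast
  have cross: "{x, y} \<union> \<mu> \<in> K"
    if xy: "x \<in> X" "x \<notin> Y" "y \<in> Y" "y \<notin> X" "{x, y} \<in> K"
      and mu: "\<mu> \<subseteq> X \<inter> Y" "finite \<mu>" "card \<mu> \<le> 2" "\<mu> = {} \<or> \<mu> = {a} \<or> (\<exists>b. \<mu> = {a, b})"
    for x y \<mu>
  proof -
    have xyne: "x \<noteq> y" using xy by blast
    have E: "{x, y} \<in> edges K - {\<sigma>\<in>K. \<sigma> \<subseteq> X \<or> \<sigma> \<subseteq> Y \<or> \<sigma> \<inter> (X \<inter> Y) \<noteq> {}}"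
      using xy xyne by (auto simp: edges_def)
    from hyp show ?thesis
    proof
      assume "X \<inter> Y \<noteq> {} \<and>
          (\<forall>\<tau>\<in>edges K - {\<sigma>\<in>K. \<sigma> \<subseteq> X \<or> \<sigma> \<subseteq> Y \<or> \<sigma> \<inter> (X \<inter> Y) \<noteq> {}}.
             \<forall>\<mu>. \<mu> \<subseteq> X \<inter> Y \<and> finite \<mu> \<and> card \<mu> \<le> 2 \<longrightarrow> \<tau> \<union> \<mu> \<in> K)"
      then show ?thesis using E mu by blast
    next
      assume "\<exists>v. X \<inter> Y = {v} \<and>
          (\<forall>\<tau>\<in>edges K - {\<sigma>\<in>K. \<sigma> \<subseteq> X \<or> \<sigma> \<subseteq> Y \<or> \<sigma> \<inter> (X \<inter> Y) \<noteq> {}}.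
             \<tau> \<union> {v} \<in> K)"
      then obtain v where v: "X \<inter> Y = {v}" and H: "\<forall>\<tau>\<in>edges K - {\<sigma>\<in>K. \<sigma> \<subseteq> X \<or> \<sigma> \<subseteq> Y \<or> \<sigma> \<inter> (X \<inter> Y) \<noteq> {}}.
             \<tau> \<union> {v} \<in> K" by blast
      have av: "a = v" using v a by blast
      show ?thesis
      proof (cases "\<mu> = {}")
        case True
        then show ?thesis using xy(5) by simp
      next
        case False
        then have "\<mu> = {v}" using mu(1) v by (metis subset_singletonD)
        then show ?thesis using H E by blast
      qed
    qed
  qed
  have edge_sub: "{p, q} \<in> K" if "p \<in> \<sigma>" "q \<in> \<sigma>" for p q
    using sc_sub[OF sc s(1), of "{p, q}"] that by blast
  have aA: "{a, b} \<in> K" if b: "b \<in> X" "b \<in> Y" for b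
  proof -
    have c: "card {a, b} \<le> 2" by (cases "a = b") auto
    have d: "{a, b} = {} \<or> {a, b} = {a} \<or> (\<exists>b'. {a, b} = {a, b'})" by blast
    have "{w, u} \<union> {a, b} \<in> K"
      by (rule cross[OF wX w(2) uY u(2) edge_sub[OF w(1) u(1)] _ _ c d]) (use a b in auto)
    then show ?thesis using sc_sub[OF sc, of "{w, u} \<union> {a, b}" "{a, b}"] by blast
  qed
  have ap: "{a, q} \<in> K" if q: "q \<in> \<sigma>" for q
  proof -
    have "q \<in> X \<union> Y" using V q by blast
    moreover
    { assume qX: "q \<in> X" "q \<notin> Y"
      have "{q, u} \<union> {a} \<in> K"
        using cross[of q u "{a}"] qX uY u(2) edge_sub[OF q u(1)] a by auto
      then have ?thesis using sc_sub[OF sc, of "{q, u} \<union> {a}" "{a, q}"] by blast }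
    moreover
    { assume qY: "q \<in> Y" "q \<notin> X"
      have "{w, q} \<union> {a} \<in> K"
        using cross[of w q "{a}"] qY wX w(2) edge_sub[OF w(1) q] a by auto
      then have ?thesis using sc_sub[OF sc, of "{w, q} \<union> {a}" "{a, q}"] by blast }
    moreover
    { assume "q \<in> X" "q \<in> Y"
      then have ?thesis using aA by blast }
    ultimately show ?thesis by blast
  qed
  have fin: "finite (insert a \<sigma>)" using sc_fin[OF sc s(1)] by simp
  have "{u, w} \<subseteq> insert a \<sigma>" using u w by blast
  then have "card {u, w} \<le> card (insert a \<sigma>)" using fin card_mono by blast
  then have c2: "2 \<le> card (insert a \<sigma>)" using uw by simp
  have pairs: "\<forall>p\<in>insert a \<sigma>. \<forall>q\<in>insert a \<sigma>. p \<noteq> q \<longrightarrow> {p, q} \<in> K"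
  proof (intro ballI impI)
    fix p q assume p: "p \<in> insert a \<sigma>" and q: "q \<in> insert a \<sigma>" and pq: "p \<noteq> q"
    show "{p, q} \<in> K"
    proof (cases "p = a")
      case True
      then show ?thesis using q pq ap by auto
    next
      case pa: False
      show ?thesis
      proof (cases "q = a")
        case True
        then have "{a, p} \<in> K" using p pa ap by auto
        then show ?thesis using True by (simp add: insert_commute)
      next
        case False
        then show ?thesis using p q pa edge_sub by auto
      qed
    qed
  qed
  show ?thesis using cl fin c2 pairs unfolding clique_complex_def by blast
qed

theorem corollary9p4:
  fixes K :: "'a set set" and X Y :: "'a set"
  assumes "simplicial_complex K" and "clique_complex K"
    and "X \<union> Y = vertices K"
    and "(X \<inter> Y \<noteq> {} \<and>
          (\<forall>\<tau>\<in>edges K - {\<sigma>\<in>K. \<sigma> \<subseteq> X \<or> \<sigma> \<subseteq> Y \<or> \<sigma> \<inter> (X \<inter> Y) \<noteq> {}}.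
             \<forall>\<mu>. \<mu> \<subseteq> X \<inter> Y \<and> finite \<mu> \<and> card \<mu> \<le> 2 \<longrightarrow> \<tau> \<union> \<mu> \<in> K))
         \<or> (\<exists>v. X \<inter> Y = {v} \<and>
          (\<forall>\<tau>\<in>edges K - {\<sigma>\<in>K. \<sigma> \<subseteq> X \<or> \<sigma> \<subseteq> Y \<or> \<sigma> \<inter> (X \<inter> Y) \<noteq> {}}.
             \<tau> \<union> {v} \<in> K))"
  shows "weak_equivalence (realization (full_subcomplex K X \<union> full_subcomplex K Y))
           (realization K) id"
proof -
  note sc = assms(1)
  obtain a where a: "a \<in> X" "a \<in> Y" using assms(4) by blast
  define L where "L = full_subcomplex K X \<union> full_subcomplex K Y"
  have inL: "\<sigma> \<in> L \<longleftrightarrow> \<sigma> \<in> K \<and> (\<sigma> \<subseteq> X \<or> \<sigma> \<subseteq> Y)" for \<sigma>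
    by (auto simp: L_def full_subcomplex_def)
  have joinK: "insert a \<sigma> \<in> K" if "\<sigma> \<in> K" "\<not> \<sigma> \<subseteq> X" "\<not> \<sigma> \<subseteq> Y" for \<sigma>
    using join_a[OF assms a that] .
  have fin: "finite \<sigma>" if "\<sigma> \<in> K" for \<sigma> using sc_fin[OF sc that] .
  have LK: "L \<subseteq> K" by (auto simp: L_def full_subcomplex_def)
  let ?r = "rr X Y a"
  let ?H = "HH X Y a"
  have rfix: "?r x = x" if "x \<in> realization_set L" for x
  proof -
    from that obtain \<sigma> where s: "\<sigma> \<in> L" "x \<in> closed_simplex \<sigma>" unfolding realization_set_def by blast
    then have "\<sigma> \<in> K" "\<sigma> \<subseteq> X \<or> \<sigma> \<subseteq> Y" using inL[of \<sigma>] by simp_all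
    then show ?thesis using rr_id[OF s(2) fin[of \<sigma>]] by blast
  qed
  have rinY: "?r \<alpha> \<in> closed_simplex (insert a \<sigma> \<inter> Y) \<and> insert a \<sigma> \<inter> Y \<in> L"
    if s: "\<sigma> \<in> K" "\<not> \<sigma> \<subseteq> X" "\<not> \<sigma> \<subseteq> Y" and al: "\<alpha> \<in> closed_simplex \<sigma>"
      and le: "sX X Y \<alpha> \<le> sX Y X \<alpha>" for \<sigma> \<alpha>
  proof
    have tK: "insert a \<sigma> \<in> K" using joinK s by blast
    have ft: "finite (insert a \<sigma>)" by (rule fin[OF tK])
    have rt: "?r \<alpha> \<in> closed_simplex (insert a \<sigma>)" using rr_cs[OF al ft] by blast
    show "?r \<alpha> \<in> closed_simplex (insert a \<sigma> \<inter> Y)"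
    proof (rule cs_restrict[OF rt ft])
      fix u assume uY: "u \<notin> Y"
      show "?r \<alpha> u = 0"
      proof (cases "u \<in> X")
        case True
        show ?thesis using rr_kill_X[OF al fin[OF s(1)] le a(2) True uY] .
      next
        case False
        then have "u \<notin> insert a \<sigma>"
          using uY sc_vert[OF sc tK, of u] assms(3) by blast
        then show ?thesis using cs_zero[OF rt] by blast
      qed
    qed
    show "insert a \<sigma> \<inter> Y \<in> L" unfolding inL using sc_sub[OF sc tK, of "insert a \<sigma> \<inter> Y"] a by blast
  qed
  have rinX: "?r \<alpha> \<in> closed_simplex (insert a \<sigma> \<inter> X) \<and> insert a \<sigma> \<inter> X \<in> L"
    if s: "\<sigma> \<in> K" "\<not> \<sigma> \<subseteq> X" "\<not> \<sigma> \<subseteq> Y" and al: "\<alpha> \<in> closed_simplex \<sigma>"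
      and le: "sX Y X \<alpha> \<le> sX X Y \<alpha>" for \<sigma> \<alpha>
  proof
    have tK: "insert a \<sigma> \<in> K" using joinK s by blast
    have ft: "finite (insert a \<sigma>)" by (rule fin[OF tK])
    have rt: "?r \<alpha> \<in> closed_simplex (insert a \<sigma>)" using rr_cs[OF al ft] by blast
    show "?r \<alpha> \<in> closed_simplex (insert a \<sigma> \<inter> X)"
    proof (rule cs_restrict[OF rt ft])
      fix u assume uX: "u \<notin> X"
      show "?r \<alpha> u = 0"
      proof (cases "u \<in> Y")
        case True
        show ?thesis using rr_kill_Y[OF al fin[OF s(1)] le a(1) True uX] .
      next
        case False
        then have "u \<notin> insert a \<sigma>"
          using uX sc_vert[OF sc tK, of u] assms(3) by blast
        then show ?thesis using cs_zero[OF rt] by blast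
      qed
    qed
    show "insert a \<sigma> \<inter> X \<in> L" unfolding inL using sc_sub[OF sc tK, of "insert a \<sigma> \<inter> X"] a by blast
  qed
  have rL: "?r \<alpha> \<in> realization_set L" if "\<alpha> \<in> realization_set K" for \<alpha>
  proof -
    from that obtain \<sigma> where s: "\<sigma> \<in> K" "\<alpha> \<in> closed_simplex \<sigma>" by (auto simp: realization_set_def)
    show ?thesis
    proof (cases "\<sigma> \<subseteq> X \<or> \<sigma> \<subseteq> Y")
      case True
      then have "?r \<alpha> = \<alpha>" using rr_id[OF s(2) fin[OF s(1)]] by blast
      moreover have "\<sigma> \<in> L" using s True inL[of \<sigma>] by simp
      ultimately show ?thesis using s unfolding realization_set_def by auto
    next
      case False
      show ?thesis
      proof (cases "sX X Y \<alpha> \<le> sX Y X \<alpha>")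
        case True
        then show ?thesis using rinY[OF s(1) _ _ s(2)] False by (auto simp: realization_set_def)
      next
        case F2: False
        then show ?thesis using rinX[OF s(1) _ _ s(2)] False by (auto simp: realization_set_def)
      qed
    qed
  qed
  have cr: "continuous_map (realization K) (realization L) ?r"
  proof (rule cont_realization)
    show "?r \<in> realization_set K \<rightarrow> topspace (realization L)" using rL by auto
    fix \<sigma> assume s: "\<sigma> \<in> K"
    show "continuous_map (CS \<sigma>) (realization L) ?r"
    proof (cases "\<sigma> \<subseteq> X \<or> \<sigma> \<subseteq> Y")
      case True
      then have sL: "\<sigma> \<in> L" using s inL[of \<sigma>] by simp
      show ?thesis
      proof (rule continuous_map_eq[OF cont_from_simplex[OF sL]])
        fix x assume "x \<in> topspace (CS \<sigma>)"
        then show "x = ?r x" using rr_id[of x \<sigma>] fin[OF s] True by simp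
      qed
    next
      case False
      then have n: "\<not> \<sigma> \<subseteq> X" "\<not> \<sigma> \<subseteq> Y" by auto
      have c1: "continuous_map (subtopology (CS \<sigma>) {x \<in> topspace (CS \<sigma>). sX X Y x \<le> sX Y X x}) (realization L) ?r"
      proof -
        have "continuous_map (subtopology (CS \<sigma>) {x \<in> topspace (CS \<sigma>). sX X Y x \<le> sX Y X x})
                (CS (insert a \<sigma> \<inter> Y)) ?r"
          unfolding continuous_map_in_subtopology
        proof
          show "continuous_map (subtopology (CS \<sigma>) {x \<in> topspace (CS \<sigma>). sX X Y x \<le> sX Y X x}) (powertop_real UNIV) ?r"
            by (rule continuous_map_from_subtopology[OF cont_rr[OF fin[OF s]]])
          show "?r \<in> topspace (subtopology (CS \<sigma>) {x \<in> topspace (CS \<sigma>). sX X Y x \<le> sX Y X x})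
                \<rightarrow> closed_simplex (insert a \<sigma> \<inter> Y)"
            using rinY[OF s n] by auto
        qed
        moreover have ZL: "insert a \<sigma> \<inter> Y \<in> L"
          unfolding inL using sc_sub[OF sc joinK[OF s n], of "insert a \<sigma> \<inter> Y"] a by blast
        ultimately have "continuous_map (subtopology (CS \<sigma>) {x \<in> topspace (CS \<sigma>). sX X Y x \<le> sX Y X x}) (realization L) ((\<lambda>x. x) \<circ> ?r)"
          using continuous_map_compose[OF _ cont_from_simplex[OF ZL]] by blast
        then show ?thesis by (simp add: o_def)
      qed
      have c2: "continuous_map (subtopology (CS \<sigma>) {x \<in> topspace (CS \<sigma>). sX Y X x \<le> sX X Y x}) (realization L) ?r"
      proof -
        have "continuous_map (subtopology (CS \<sigma>) {x \<in> topspace (CS \<sigma>). sX Y X x \<le> sX X Y x})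
                (CS (insert a \<sigma> \<inter> X)) ?r"
          unfolding continuous_map_in_subtopology
        proof
          show "continuous_map (subtopology (CS \<sigma>) {x \<in> topspace (CS \<sigma>). sX Y X x \<le> sX X Y x}) (powertop_real UNIV) ?r"
            by (rule continuous_map_from_subtopology[OF cont_rr[OF fin[OF s]]])
          show "?r \<in> topspace (subtopology (CS \<sigma>) {x \<in> topspace (CS \<sigma>). sX Y X x \<le> sX X Y x})
                \<rightarrow> closed_simplex (insert a \<sigma> \<inter> X)"
            using rinX[OF s n] by auto
        qed
        moreover have ZL: "insert a \<sigma> \<inter> X \<in> L"
          unfolding inL using sc_sub[OF sc joinK[OF s n], of "insert a \<sigma> \<inter> X"] a by blast
        ultimately have "continuous_map (subtopology (CS \<sigma>) {x \<in> topspace (CS \<sigma>). sX Y X x \<le> sX X Y x}) (realization L) ((\<lambda>x. x) \<circ> ?r)"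
          using continuous_map_compose[OF _ cont_from_simplex[OF ZL]] by blast
        then show ?thesis by (simp add: o_def)
      qed
      have "continuous_map (CS \<sigma>) (realization L) (\<lambda>x. if sX X Y x \<le> sX Y X x then ?r x else ?r x)"
        by (rule continuous_map_cases_le[OF cont_sX[OF fin[OF s]] cont_sX[OF fin[OF s]] c1 c2]) simp
      then show ?thesis by simp
    qed
  qed
  have Hid: "?H (t, \<alpha>) = \<alpha>" if "?r \<alpha> = \<alpha>" for t \<alpha>
    using that by (simp add: HH_def)
  have HK: "?H (t, \<alpha>) \<in> closed_simplex (insert a \<sigma>)"
    if s: "\<sigma> \<in> K" "\<not> \<sigma> \<subseteq> X" "\<not> \<sigma> \<subseteq> Y" and al: "\<alpha> \<in> closed_simplex \<sigma>" and t: "t \<in> {0..1}" for \<sigma> \<alpha> t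
  proof -
    have tK: "insert a \<sigma> \<in> K" using joinK s by blast
    have ft: "finite (insert a \<sigma>)" by (rule fin[OF tK])
    show ?thesis
      by (rule HH_cs[OF cs_mono[OF al ft] rr_cs[OF al ft] t]) auto
  qed
  have cH: "continuous_map (prod_topology (top_of_set {0..1::real}) (realization K)) (realization K) ?H"
  proof (rule cont_realization_prod)
    show "?H \<in> {0..1} \<times> realization_set K \<rightarrow> topspace (realization K)"
    proof
      fix p assume "p \<in> {0..1::real} \<times> realization_set K"
      then obtain t \<alpha> \<sigma> where p: "p = (t, \<alpha>)" "t \<in> {0..1}" "\<sigma> \<in> K" "\<alpha> \<in> closed_simplex \<sigma>"
        by (auto simp: realization_set_def)
      show "?H p \<in> topspace (realization K)"
      proof (cases "\<sigma> \<subseteq> X \<or> \<sigma> \<subseteq> Y")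
        case True
        then have "?H p = \<alpha>" using p Hid rr_id[OF p(4) fin[OF p(3)]] by blast
        then show ?thesis using p by (auto simp: realization_set_def)
      next
        case False
        then have "?H p \<in> closed_simplex (insert a \<sigma>)" "insert a \<sigma> \<in> K"
          using HK[OF p(3) _ _ p(4) p(2)] joinK[OF p(3)] p(1) by auto
        then show ?thesis by (auto simp: realization_set_def)
      qed
    qed
    fix \<sigma> assume s: "\<sigma> \<in> K"
    show "continuous_map (prod_topology (top_of_set {0..1::real}) (CS \<sigma>)) (realization K) ?H"
    proof (cases "\<sigma> \<subseteq> X \<or> \<sigma> \<subseteq> Y")
      case True
      have "continuous_map (prod_topology (top_of_set {0..1::real}) (CS \<sigma>)) (realization K) ((\<lambda>x. x) \<circ> snd)"
        using continuous_map_compose[OF continuous_map_snd cont_from_simplex[OF s]] .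
      then show ?thesis
      proof (rule continuous_map_eq)
        fix p assume "p \<in> topspace (prod_topology (top_of_set {0..1::real}) (CS \<sigma>))"
        then have "snd p \<in> closed_simplex \<sigma>" by auto
        then have "?r (snd p) = snd p" using rr_id[OF _ fin[OF s] True] by blast
        then show "((\<lambda>x. x) \<circ> snd) p = ?H p" by (simp add: HH_def)
      qed
    next
      case False
      then have n: "\<not> \<sigma> \<subseteq> X" "\<not> \<sigma> \<subseteq> Y" by auto
      have tK: "insert a \<sigma> \<in> K" using joinK s n by blast
      have "continuous_map (prod_topology (top_of_set {0..1::real}) (CS \<sigma>)) (CS (insert a \<sigma>)) ?H"
        unfolding continuous_map_in_subtopology
      proof
        show "continuous_map (prod_topology (top_of_set {0..1::real}) (CS \<sigma>)) (powertop_real UNIV) ?H"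
          by (rule cont_HH[OF fin[OF s]])
        show "?H \<in> topspace (prod_topology (top_of_set {0..1::real}) (CS \<sigma>)) \<rightarrow> closed_simplex (insert a \<sigma>)"
          using HK[OF s n] by auto
      qed
      then have "continuous_map (prod_topology (top_of_set {0..1::real}) (CS \<sigma>)) (realization K) ((\<lambda>x. x) \<circ> ?H)"
        using continuous_map_compose[OF _ cont_from_simplex[OF tK]] by blast
      then show ?thesis by (simp add: o_def)
    qed
  qed
  have H0: "?H (0, x) = x" for x by (simp add: HH_def)
  have H1: "?H (1, x) = ?r x" for x by (simp add: HH_def)
  have Hfix: "?H (t, x) = x" if "t \<in> {0..1}" "x \<in> topspace (realization L)" for t x
    using Hid rfix that by simp
  have cid: "continuous_map (realization L) (realization K) id"
    unfolding id_def
  proof (rule cont_realization)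
    show "(\<lambda>x. x) \<in> realization_set L \<rightarrow> topspace (realization K)"
      using LK by (auto simp: realization_set_def)
    fix \<sigma> assume "\<sigma> \<in> L"
    then have "\<sigma> \<in> K" using inL[of \<sigma>] by simp
    then show "continuous_map (CS \<sigma>) (realization K) (\<lambda>x. x)" by (rule cont_from_simplex)
  qed
  have ne: "topspace (realization L) \<noteq> {}"
  proof -
    have "{a} \<in> K" using a assms(3) by (auto simp: vertices_def)
    then have aL: "{a} \<in> L" using inL[of "{a}"] a by simp
    have "(\<lambda>u. if u = a then 1 else 0 :: real) \<in> closed_simplex {a}"
      by (simp add: closed_simplex_def)
    then show ?thesis using aL by (auto simp: realization_set_def)
  qed
  have "weak_equivalence (realization L) (realization K) id"
    by (rule weq_from_retraction[OF cid cr _ cH H0 H1 Hfix]) (use rfix ne in auto)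
  then show ?thesis by (simp add: L_def)
qed

end
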